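(* For $0\le a\le1/3$ let $R=\sqrt{a(4-3a)}$, $b=\tfrac12(2-a-R)$, $c=\tfrac12(2-a+R)$, and for $s\in\mathbb{R}$ define $$h(a,s)=(a+s(b-a))\bigl(c-(a+s(b-a))\bigr),$$ $$g(a,s)=3a(1-a)(1+s)+(9a^2-12a+2)s^2+\bigl(1-3a-(5-9a)s+(2-3a)s^2\bigr)R.$$ Then for $0\le a\le1/3$ and $0\le s\le1/2$: (i) $h(a,s)\le h(a,1-s)$; (ii) $g(a,s)\ge0$; and (iii) $g(a,s)+g(a,1-s)\ge0$. *)

theory Defs
  imports Complex_Main
begin

definition RR :: "real \<Rightarrow> real" where
  "RR a = sqrt (a * (4 - 3 * a))"

definition bb :: "real \<Rightarrow> real" where
  "bb a = (2 - a - RR a) / 2"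

definition cc :: "real \<Rightarrow> real" where
  "cc a = (2 - a + RR a) / 2"

definition hh :: "real \<Rightarrow> real \<Rightarrow> real" where
  "hh a s = (a + s * (bb a - a)) * (cc a - (a + s * (bb a - a)))"

definition gg :: "real \<Rightarrow> real \<Rightarrow> real" where
  "gg a s = 3 * a * (1 - a) * (1 + s) + (9 * a^2 - 12 * a + 2) * s^2
          + (1 - 3 * a - (5 - 9 * a) * s + (2 - 3 * a) * s^2) * RR a"

end

theory Submission
  imports Defs
begin

definition PP :: "real \<Rightarrow> real \<Rightarrow> real" where
 "PP t s = 2*(t^3+3*t^2-9*t-3) + 2*(-5*t^3+3*t^2+21*t-3)*s + (t^4+4*t^3-18*t^2-12*t+9)*s^2"

lemma PP_uw: "PP t s = (t-3)^3*(((t-3)/4+1) - (1/2-s)*((t-3)+6) + (1/2-s)^2*((t-3)+16))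
   + (1/2-s)*(96+96*(t-3)+12*(t-3)^2) + (1/2-s)^2*(72*(t-3)^2+96*(t-3))"
  unfolding PP_def by (simp add: field_simps eval_nat_numeral)

lemma PP_sum: "PP t s + PP t (1-s) = 2*((t-3)^4/4+(t-3)^3) + 2*((t-3)^4+16*(t-3)^3+72*(t-3)^2+96*(t-3))*(1/2-s)^2"
  unfolding PP_def by (simp add: field_simps eval_nat_numeral)

lemma brk: fixes u w :: real assumes "u \<ge> 0"
  shows "(u/4+1) - w*(u+6) + w^2*(u+16) \<ge> 0"
proof -
  have "4*(u+16)*((u/4+1) - w*(u+6) + w^2*(u+16)) = (2*(u+16)*w - (u+6))^2 + (28+8*u)"
    by algebra
  moreover have "(2*(u+16)*w - (u+6))^2 + (28+8*u) > 0" using assms by (smt (verit) zero_le_power2)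
  ultimately show ?thesis using assms
    by (smt (verit) mult_pos_pos zero_less_mult_iff)
qed

lemma PP_nonneg: assumes "t \<ge> 3" "0 \<le> s" "s \<le> 1/2" shows "PP t s \<ge> 0"
proof -
  have "(t-3)^3*(((t-3)/4+1) - (1/2-s)*((t-3)+6) + (1/2-s)^2*((t-3)+16)) \<ge> 0"
    using brk[of "t-3" "1/2-s"] assms by simp
  moreover have "(1/2-s)*(96+96*(t-3)+12*(t-3)^2) \<ge> 0" using assms by simp
  moreover have "(1/2-s)^2*(72*(t-3)^2+96*(t-3)) \<ge> 0" using assms by simp
  ultimately show ?thesis unfolding PP_uw by linarith
qed

lemma PP_sum_nonneg: assumes "t \<ge> 3" shows "PP t s + PP t (1-s) \<ge> 0"
  unfolding PP_sum using assms by simp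

lemma g_id: fixes a s R t :: real
  assumes "a*(3+t^2) = 4" "R = t*a"
  shows "(3+t^2)^2 * (3 * a * (1 - a) * (1 + s) + (9 * a^2 - 12 * a + 2) * s^2
          + (1 - 3 * a - (5 - 9 * a) * s + (2 - 3 * a) * s^2) * R) = 2 * PP t s"
proof -
  define D where "D = 3+t^2"
  have e: "3 * a * (1 - a) * (1 + s) + (9 * a^2 - 12 * a + 2) * s^2
          + (1 - 3 * a - (5 - 9 * a) * s + (2 - 3 * a) * s^2) * R
     = 2*s^2 + (3*(1+s) - 12*s^2 + t*(1-5*s+2*s^2))*a + (-3*(1+s) + 9*s^2 + t*(-3+9*s-3*s^2))*a^2"
    unfolding assms(2) by (simp add: algebra_simps power2_eq_square)
  have "D^2 * (2*s^2 + (3*(1+s) - 12*s^2 + t*(1-5*s+2*s^2))*a + (-3*(1+s) + 9*s^2 + t*(-3+9*s-3*s^2))*a^2)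
     = D^2 * (2*s^2) + (3*(1+s) - 12*s^2 + t*(1-5*s+2*s^2))*D*(a*D) + (-3*(1+s) + 9*s^2 + t*(-3+9*s-3*s^2))*(a*D)^2"
    by (simp add: algebra_simps power2_eq_square)
  also have "\<dots> = D^2 * (2*s^2) + (3*(1+s) - 12*s^2 + t*(1-5*s+2*s^2))*D*4 + (-3*(1+s) + 9*s^2 + t*(-3+9*s-3*s^2))*16"
    using assms(1) unfolding D_def by simp
  also have "\<dots> = 2 * PP t s" unfolding D_def PP_def by (simp add: algebra_simps eval_nat_numeral)
  finally show ?thesis unfolding e D_def .
qed

lemma RR_sq: assumes "0 \<le> a" "a \<le> 1/3" shows "(RR a)^2 = a*(4-3*a)" "RR a \<ge> 0"
  using assms unfolding RR_def by auto

lemma RR_ge: assumes "0 \<le> a" "a \<le> 1/3" shows "RR a \<ge> a"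
proof -
  have "sqrt (a^2) \<le> sqrt (a*(4-3*a))" using assms
  proof (intro real_sqrt_le_mono)
    have "a*(4-3*a) - a^2 = 4*(a*(1-a))" by (simp add: algebra_simps power2_eq_square)
    moreover have "a*(1-a) \<ge> 0" using assms by simp
    ultimately show "a^2 \<le> a*(4-3*a)" by linarith
  qed
  then show ?thesis using assms unfolding RR_def by simp
qed

lemma RR_le: assumes "0 \<le> a" "a \<le> 1/3" shows "RR a \<le> 2 - 3*a"
proof -
  have "sqrt (a*(4-3*a)) \<le> sqrt ((2-3*a)^2)" using assms
  proof (intro real_sqrt_le_mono)
    have "(2-3*a)^2 - a*(4-3*a) = 4*((1-a)*(1-3*a))" by (simp add: algebra_simps power2_eq_square)
    moreover have "(1-a)*(1-3*a) \<ge> 0" using assms by simp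
    ultimately show "a*(4-3*a) \<le> (2-3*a)^2" by linarith
  qed
  then show ?thesis using assms unfolding RR_def by simp
qed

lemma g_nonneg_both: assumes "0 \<le> a" "a \<le> 1/3" "0 \<le> s" "s \<le> 1/2"
  shows "gg a s \<ge> 0 \<and> gg a s + gg a (1 - s) \<ge> 0"
proof (cases "a = 0")
  case True
  then have "RR a = 0" unfolding RR_def by simp
  then show ?thesis using True unfolding gg_def by simp
next
  case False
  then have apos: "a > 0" using assms by simp
  define t where "t = RR a / a"
  have R: "RR a = t*a" unfolding t_def using apos by simp
  have "(t*a)^2 = a*(4-3*a)" using RR_sq[OF assms(1,2)] R by simp
  then have "a*(a*(3+t^2)) = a*4" by (simp add: algebra_simps power2_eq_square)
  then have aD: "a*(3+t^2) = 4" using apos by simp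
  have tnn: "t \<ge> 0" unfolding t_def using RR_sq(2)[OF assms(1,2)] apos by simp
  have "4 \<le> (1/3)*(3+t^2)" using aD assms(2) mult_right_mono[of a "1/3" "3+t^2"]
    by (smt (verit) zero_le_power2)
  then have "t^2 \<ge> 3^2" by simp
  then have t3: "t \<ge> 3" using tnn power2_le_imp_le by blast
  have Dpos: "(3+t^2)^2 > 0" by (smt (verit) zero_le_power2 zero_less_power)
  have g1: "(3+t^2)^2 * gg a s = 2 * PP t s" unfolding gg_def using g_id[OF aD R] .
  have g2: "(3+t^2)^2 * gg a (1-s) = 2 * PP t (1-s)" unfolding gg_def using g_id[OF aD R] .
  have "(3+t^2)^2 * gg a s \<ge> 0" using g1 PP_nonneg[OF t3 assms(3,4)] by simp
  then have A: "gg a s \<ge> 0" using Dpos by (simp add: zero_le_mult_iff)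
  have "(3+t^2)^2 * (gg a s + gg a (1-s)) \<ge> 0"
    using g1 g2 PP_sum_nonneg[OF t3, of s] by (simp add: distrib_left)
  then have B: "gg a s + gg a (1-s) \<ge> 0" using Dpos by (simp add: zero_le_mult_iff)
  show ?thesis using A B by simp
qed

lemma h_part: assumes "0 \<le> a" "a \<le> 1/3" "0 \<le> s" "s \<le> 1/2"
  shows "hh a s \<le> hh a (1 - s)"
proof -
  have gen: "\<And>x d c::real. (x+(1-s)*d)*(c-(x+(1-s)*d)) - (x+s*d)*(c-(x+s*d)) = (1-2*s)*d*(c-2*x-d)"
    by (simp add: algebra_simps)
  have "cc a - 2*a - (bb a - a) = RR a - a" unfolding bb_def cc_def by (simp add: field_simps)
  then have "hh a (1-s) - hh a s = (1-2*s)*(bb a - a)*(RR a - a)"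
    unfolding hh_def using gen[of a "bb a - a" "cc a"] by simp
  moreover have "(1-2*s)*(bb a - a)*(RR a - a) \<ge> 0"
    using assms RR_ge[OF assms(1,2)] RR_le[OF assms(1,2)] unfolding bb_def by simp
  ultimately show ?thesis by simp
qed

theorem lemmaB1:
  fixes a s :: real
  assumes "0 \<le> a" "a \<le> 1/3" "0 \<le> s" "s \<le> 1/2"
  shows "hh a s \<le> hh a (1 - s) \<and> gg a s \<ge> 0 \<and> gg a s + gg a (1 - s) \<ge> 0"
  using h_part[OF assms] g_nonneg_both[OF assms] by simp

end
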